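(* For every probability distribution $G$ on $\Theta$ there exists a deterministic IC and IR mechanism $M^{\rm OPT}=(r^{\rm OPT},q^{\rm OPT},u^{\rm OPT})$ that is optimal for $G$ (i.e. $\mathrm{RS}_\alpha(M^{\rm OPT},G)\ge\mathrm{RS}_\alpha(M,G)$ for every IC and IR mechanism $M$), satisfies DD, and has a quantity floor: $q^{\rm OPT}(\theta)\ge\hat q$ whenever $q^{\rm OPT}(\theta)>0$.
   Context: Setting. Let $\Theta=[\underline\theta,\overline\theta]$ with $0<\underline\theta<\overline\theta$. Let $c>0$ and let $P:\mathbb R_+\to\mathbb R_+$ be continuous and strictly decreasing with $P(\overline q)=0$ for some $\overline q>0$. Put $V(q)=\int_0^q P(z)\,dz$ and $\mathrm{TS}(\theta,q)=V(q)-c-\theta q$ for $q>0$, $\mathrm{TS}(\theta,0)=0$. Assume (A2): $\mathrm{TS}(\overline\theta,P^{-1}(\overline\theta))>0$. A mechanism is a triple $M=(r,q,u)$ of functions $r:\Theta\to[0,1]$, $q:\Theta\to[0,\overline q]$, $u:\Theta\to\mathbb R$ with $q(\theta)=0$ if and only if $r(\theta)=0$. It is IC if $u(\theta)\ge u(\theta')+(\theta'-\theta)q(\theta')r(\theta')$ for all $\theta,\theta'\in\Theta$, and IR if $u(\theta)\ge 0$ for all $\theta$. (Known fact: $M$ is IC iff $\theta\mapsto q(\theta)r(\theta)$ is nonincreasing and $u(\theta)=u(\overline\theta)+\int_\theta^{\overline\theta}q(z)r(z)\,dz$ for all $\theta$; an IC mechanism is IR iff $u(\overline\theta)\ge0$.)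 A mechanism is deterministic if $r(\theta)\in\{0,1\}$ for all $\theta$. Fix $\alpha\in[0,1)$. The regulator's surplus at $\theta$ is $\mathrm{RS}_\alpha(\theta,M)=r(\theta)\,\mathrm{TS}(\theta,q(\theta))-(1-\alpha)u(\theta)$. For a probability distribution (CDF) $G$ on $\Theta$, $\mathrm{RS}_\alpha(M,G)=\int_\Theta \mathrm{RS}_\alpha(\theta,M)\,dG(\theta)$. The quantity floor $\hat q$ is the unique $q>0$ with $V(q)-qP(q)=c$. The efficient quantity is $q_e(\theta)=P^{-1}(\theta)$. A mechanism satisfies downward distortion (DD) if $q(\theta)\le q_e(\theta)$ for all $\theta$, with equality at $\theta=\underline\theta$. *)

theory Defs
  imports "HOL-Analysis.Analysis" "HOL-Probability.Probability"
begin

definition V :: "(real \<Rightarrow> real) \<Rightarrow> real \<Rightarrow> real" where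
  "V P q = integral {0..q} P"

definition TS :: "(real \<Rightarrow> real) \<Rightarrow> real \<Rightarrow> real \<Rightarrow> real \<Rightarrow> real" where
  "TS P c \<theta> q = (if q = 0 then 0 else V P q - c - \<theta> * q)"

definition q_eff :: "(real \<Rightarrow> real) \<Rightarrow> real \<Rightarrow> real" where
  "q_eff P \<theta> = (THE q. 0 \<le> q \<and> P q = \<theta>)"

definition q_hat :: "(real \<Rightarrow> real) \<Rightarrow> real \<Rightarrow> real" where
  "q_hat P c = (THE q. 0 < q \<and> V P q - q * P q = c)"

definition is_mechanism ::
  "real \<Rightarrow> real \<Rightarrow> real \<Rightarrow> (real \<Rightarrow> real) \<Rightarrow> (real \<Rightarrow> real) \<Rightarrow> (real \<Rightarrow> real) \<Rightarrow> bool" where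
  "is_mechanism tlo thi qbar r q u \<longleftrightarrow>
     (\<forall>\<theta>\<in>{tlo..thi}. 0 \<le> r \<theta> \<and> r \<theta> \<le> 1 \<and> 0 \<le> q \<theta> \<and> q \<theta> \<le> qbar
                    \<and> (q \<theta> = 0 \<longleftrightarrow> r \<theta> = 0))"

definition is_IC ::
  "real \<Rightarrow> real \<Rightarrow> (real \<Rightarrow> real) \<Rightarrow> (real \<Rightarrow> real) \<Rightarrow> (real \<Rightarrow> real) \<Rightarrow> bool" where
  "is_IC tlo thi r q u \<longleftrightarrow>
     (\<forall>\<theta>\<in>{tlo..thi}. \<forall>\<theta>'\<in>{tlo..thi}. u \<theta> \<ge> u \<theta>' + (\<theta>' - \<theta>) * q \<theta>' * r \<theta>')"

definition is_IR :: "real \<Rightarrow> real \<Rightarrow> (real \<Rightarrow> real) \<Rightarrow> bool" where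
  "is_IR tlo thi u \<longleftrightarrow> (\<forall>\<theta>\<in>{tlo..thi}. u \<theta> \<ge> 0)"

definition deterministic :: "real \<Rightarrow> real \<Rightarrow> (real \<Rightarrow> real) \<Rightarrow> bool" where
  "deterministic tlo thi r \<longleftrightarrow> (\<forall>\<theta>\<in>{tlo..thi}. r \<theta> = 0 \<or> r \<theta> = 1)"

definition RS ::
  "(real \<Rightarrow> real) \<Rightarrow> real \<Rightarrow> real \<Rightarrow> (real \<Rightarrow> real) \<Rightarrow> (real \<Rightarrow> real) \<Rightarrow> (real \<Rightarrow> real) \<Rightarrow> real \<Rightarrow> real" where
  "RS P c \<alpha> r q u \<theta> = r \<theta> * TS P c \<theta> (q \<theta>) - (1 - \<alpha>) * u \<theta>"

definition RS_exp ::
  "(real \<Rightarrow> real) \<Rightarrow> real \<Rightarrow> real \<Rightarrow> real \<Rightarrow> real \<Rightarrow> real measure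
     \<Rightarrow> (real \<Rightarrow> real) \<Rightarrow> (real \<Rightarrow> real) \<Rightarrow> (real \<Rightarrow> real) \<Rightarrow> real" where
  "RS_exp P c \<alpha> tlo thi G r q u = (\<integral>\<theta>\<in>{tlo..thi}. RS P c \<alpha> r q u \<theta> \<partial>G)"

definition DD :: "(real \<Rightarrow> real) \<Rightarrow> real \<Rightarrow> real \<Rightarrow> (real \<Rightarrow> real) \<Rightarrow> bool" where
  "DD P tlo thi q \<longleftrightarrow> (\<forall>\<theta>\<in>{tlo..thi}. q \<theta> \<le> q_eff P \<theta>) \<and> q tlo = q_eff P tlo"

end

theory Submission
  imports Defs
begin

lemma helly_gen:
  fixes f :: "nat \<Rightarrow> real \<Rightarrow> real"
  assumes mono: "\<And>n. mono (f n)"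
  assumes bdd: "\<And>n x. \<bar>f n x\<bar> \<le> M"
  assumes B: "countable B"
  shows "\<exists>s. strict_mono (s::nat \<Rightarrow> nat) \<and> (\<exists>F. mono F \<and>
    (\<forall>x. continuous (at x) F \<longrightarrow> (\<lambda>n. f (s n) x) \<longlonglongrightarrow> F x)) \<and> (\<forall>x\<in>B. convergent (\<lambda>n. f (s n) x))"
proof -
  define R where "R = \<rat> \<union> B"
  have cR: "countable R" unfolding R_def using B countable_rat by auto
  have neR: "R \<noteq> {}" unfolding R_def using Rats_0 by auto
  define r where "r = from_nat_into R"
  have rangeR: "range r = R" unfolding r_def using cR neR by simp
  have dense_r: "\<And>x y. x < y \<Longrightarrow> \<exists>n. x < r n \<and> r n < y"
  proof -
    fix x y :: real assume "x < y"
    then obtain q where q: "q \<in> \<rat>" "x < q" "q < y" using Rats_dense_in_real by blast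
    then have "q \<in> range r" using rangeR unfolding R_def by auto
    then show "\<exists>n. x < r n \<and> r n < y" using q by auto
  qed
  have Br: "\<And>x. x \<in> B \<Longrightarrow> \<exists>n. x = r n" using rangeR unfolding R_def by auto

  let ?P = "\<lambda>n. \<lambda>s. convergent (\<lambda>k. f (s k) (r n))"
  interpret nat: subseqs ?P
  proof (unfold convergent_def, unfold subseqs_def, auto)
    fix n :: nat and s :: "nat \<Rightarrow> nat" assume s: "strict_mono s"
    have "bounded {-M..M}"
      using bounded_closed_interval by auto
    moreover have "\<And>k. f (s k) (r n) \<in> {-M..M}"
      using bdd by (simp add: abs_le_iff minus_le_iff)
    ultimately have "\<exists>l s'. strict_mono s' \<and> ((\<lambda>k. f (s k) (r n)) \<circ> s') \<longlonglongrightarrow> l"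
      using compact_Icc compact_imp_seq_compact seq_compactE by metis
    thus "\<exists>s'. strict_mono (s'::nat\<Rightarrow>nat) \<and> (\<exists>l. (\<lambda>k. f (s (s' k)) (r n)) \<longlonglongrightarrow> l)"
      by (auto simp: comp_def)
  qed
  define d where "d = nat.diagseq"
  have subseq: "strict_mono d"
    unfolding d_def using nat.subseq_diagseq by auto
  have rat_cnv: "?P n d" for n
  proof -
    have Pn_seqseq: "?P n (nat.seqseq (Suc n))"
      by (rule nat.seqseq_holds)
    have 1: "(\<lambda>k. f ((nat.seqseq (Suc n) \<circ> (\<lambda>k. nat.fold_reduce (Suc n) k
      (Suc n + k))) k) (r n)) = (\<lambda>k. f (nat.seqseq (Suc n) k) (r n)) \<circ>
      (\<lambda>k. nat.fold_reduce (Suc n) k (Suc n + k))"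
      by auto
    have 2: "?P n (d \<circ> ((+) (Suc n)))"
      unfolding d_def nat.diagseq_seqseq 1
      by (intro convergent_subseq_convergent Pn_seqseq nat.subseq_diagonal_rest)
    then obtain L where 3: "(\<lambda>na. f (d (na + Suc n)) (r n)) \<longlonglongrightarrow> L"
      by (auto simp: add.commute dest: convergentD)
    then have "(\<lambda>k. f (d k) (r n)) \<longlonglongrightarrow> L"
      by (rule LIMSEQ_offset)
    then show ?thesis
      by (auto simp: convergent_def)
  qed
  let ?f = "\<lambda>n. \<lambda>k. f (d k) (r n)"
  have lim_f: "?f n \<longlonglongrightarrow> lim (?f n)" for n
    using rat_cnv convergent_LIMSEQ_iff by auto
  have lim_bdd: "lim (?f n) \<in> {-M..M}" for n
  proof -
    have "closed {-M..M}" using closed_real_atLeastAtMost by auto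
    hence "(\<forall>i. ?f n i \<in> {-M..M}) \<and> ?f n \<longlonglongrightarrow> lim (?f n) \<longrightarrow> lim (?f n) \<in> {-M..M}"
      unfolding closed_sequential_limits by (drule_tac x = "\<lambda>k. f (d k) (r n)" in spec) blast
    moreover have "\<forall>i. ?f n i \<in> {-M..M}"
      using bdd by (simp add: abs_le_iff minus_le_iff)
    ultimately show "lim (?f n) \<in> {-M..M}"
      using lim_f by auto
  qed
  then have limset_bdd: "\<And>x. {lim (?f n) |n. x < r n} \<subseteq> {-M..M}"
    by auto
  then have bdd_below: "bdd_below {lim (?f n) |n. x < r n}" for x
    by (metis (mono_tags) bdd_below_Icc bdd_below_mono)
  have r_unbdd: "\<exists>n. x < r n" for x
    using dense_r[OF less_add_one, of x] by auto
  then have nonempty: "{lim (?f n) |n. x < r n} \<noteq> {}" for x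
    by auto

  define F where "F x = Inf {lim (?f n) |n. x < r n}" for x
  have F_eq: "ereal (F x) = (INF n\<in>{n. x < r n}. ereal (lim (?f n)))" for x
    unfolding F_def by (subst ereal_Inf'[OF bdd_below nonempty]) (simp add: setcompr_eq_image image_comp)
  have mono_F: "mono F"
    using nonempty by (auto intro!: cInf_superset_mono simp: F_def bdd_below mono_def)
  moreover have "(\<lambda>n. f (d n) x) \<longlonglongrightarrow> F x" if cts: "continuous (at x) F" for x
  proof (rule limsup_le_liminf_real)
    show "limsup (\<lambda>n. f (d n) x) \<le> F x"
    proof (rule tendsto_lowerbound)
      show "(F \<longlongrightarrow> ereal (F x)) (at_right x)"
        using cts unfolding continuous_at_split by (auto simp: continuous_within)
      show "\<forall>\<^sub>F i in at_right x. limsup (\<lambda>n. f (d n) x) \<le> F i"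
        unfolding eventually_at_right[OF less_add_one]
      proof (rule, rule, rule less_add_one, safe)
        fix y assume y: "x < y"
        with dense_r obtain N where "x < r N" "r N < y" by auto
        have *: "y < r n' \<Longrightarrow> lim (?f N) \<le> lim (?f n')" for n'
          using \<open>r N < y\<close> by (intro LIMSEQ_le[OF lim_f lim_f]) (auto intro!: mono[THEN monoD])
        have "limsup (\<lambda>n. f (d n) x) \<le> limsup (?f N)"
          using \<open>x < r N\<close> by (auto intro!: Limsup_mono always_eventually mono[THEN monoD])
        also have "\<dots> = lim (\<lambda>n. ereal (?f N n))"
          using rat_cnv[of N] by (force intro!: convergent_limsup_cl simp: convergent_def)
        also have "\<dots> \<le> F y"
          by (auto intro!: INF_greatest * simp: convergent_real_imp_convergent_ereal rat_cnv F_eq)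
        finally show "limsup (\<lambda>n. f (d n) x) \<le> F y" .
      qed
    qed simp
    show "F x \<le> liminf (\<lambda>n. f (d n) x)"
    proof (rule tendsto_upperbound)
      show "(F \<longlongrightarrow> ereal (F x)) (at_left x)"
        using cts unfolding continuous_at_split by (auto simp: continuous_within)
      show "\<forall>\<^sub>F i in at_left x. F i \<le> liminf (\<lambda>n. f (d n) x)"
        unfolding eventually_at_left[OF minus_one_less]
      proof (rule, rule, rule minus_one_less, safe)
        fix y assume y: "y < x"
        with dense_r obtain N where "y < r N" "r N < x" by auto
        have "F y \<le> liminf (?f N)"
          using \<open>y < r N\<close> by (auto simp: F_eq convergent_real_imp_convergent_ereal
            rat_cnv convergent_liminf_cl intro!: INF_lower2)
        also have "\<dots> \<le> liminf (\<lambda>n. f (d n) x)"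
          using \<open>r N < x\<close> by (auto intro!: Liminf_mono monoD[OF mono] always_eventually)
        finally show "F y \<le> liminf (\<lambda>n. f (d n) x)" .
      qed
    qed simp
  qed
  moreover have "\<forall>x\<in>B. convergent (\<lambda>n. f (d n) x)"
    using Br rat_cnv by blast
  ultimately show ?thesis using subseq by blast
qed

lemma helly_all:
  fixes f :: "nat \<Rightarrow> real \<Rightarrow> real"
  assumes mono: "\<And>n. mono (f n)"
  assumes bdd: "\<And>n x. \<bar>f n x\<bar> \<le> M"
  shows "\<exists>s. strict_mono (s::nat \<Rightarrow> nat) \<and> (\<forall>x. convergent (\<lambda>n. f (s n) x))"
proof -
  obtain s1 F where s1: "strict_mono s1" "mono F"
    and c1: "\<And>x. continuous (at x) F \<Longrightarrow> (\<lambda>n. f (s1 n) x) \<longlonglongrightarrow> F x"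
    using helly_gen[where f=f and M=M and B="{}", OF mono bdd] by auto
  define N where "N = {x. \<not> isCont F x}"
  have cN: "countable N" unfolding N_def using mono_ctble_discont[OF s1(2)] .
  obtain s2 where s2: "strict_mono s2" and c2: "\<And>x. x \<in> N \<Longrightarrow> convergent (\<lambda>n. f (s1 (s2 n)) x)"
    using helly_gen[where f="\<lambda>n. f (s1 n)" and M=M and B=N, OF mono bdd cN] by auto
  have "convergent (\<lambda>n. f ((s1 \<circ> s2) n) x)" for x
  proof (cases "x \<in> N")
    case True then show ?thesis using c2 by simp
  next
    case False
    then have "(\<lambda>n. f (s1 n) x) \<longlonglongrightarrow> F x" using c1 unfolding N_def by auto
    then have "(\<lambda>n. f (s1 (s2 n)) x) \<longlonglongrightarrow> F x"
      using LIMSEQ_subseq_LIMSEQ[OF _ s2] by (auto simp: comp_def)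
    then show ?thesis by (auto simp: convergent_def)
  qed
  moreover have "strict_mono (s1 \<circ> s2)" using s1 s2 by (simp add: strict_mono_o)
  ultimately show ?thesis by blast
qed

locale setting =
  fixes P :: "real \<Rightarrow> real" and c \<alpha> tlo thi qbar :: real and G :: "real measure"
  assumes tlo_pos: "0 < tlo" and tlo_thi: "tlo < thi" and c_pos: "c > 0" and qbar_pos: "qbar > 0"
    and Pcont: "continuous_on {0..} P" and Pnn: "\<forall>x\<ge>0. P x \<ge> 0"
    and Pmono: "\<forall>x y. 0 \<le> x \<and> x \<le> y \<longrightarrow> P y \<le> P x"
    and Pstrict: "\<forall>x y. 0 \<le> x \<and> x < y \<and> y \<le> qbar \<longrightarrow> P y < P x"
    and Pqbar: "P qbar = 0"
    and A2: "\<exists>q\<ge>0. P q = thi \<and> TS P c thi q > 0"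
    and al0: "0 \<le> \<alpha>" and al1: "\<alpha> < 1"
    and probG: "prob_space G" and setsG: "sets G = sets borel" and measG: "measure G {tlo..thi} = 1"
begin

lemma P_int: "0 \<le> a \<Longrightarrow> P integrable_on {a..b}"
  by (rule integrable_continuous_interval, rule continuous_on_subset[OF Pcont]) auto

lemma P_big: "qbar \<le> s \<Longrightarrow> P s = 0"
proof -
  assume s: "qbar \<le> s"
  have "P s \<le> P qbar" using Pmono s qbar_pos by auto
  moreover have "P s \<ge> 0" using Pnn s qbar_pos by auto
  ultimately show ?thesis using Pqbar by auto
qed

lemma V_split: "0 \<le> a \<Longrightarrow> a \<le> b \<Longrightarrow> V P b = V P a + integral {a..b} P"
  unfolding V_def using Henstock_Kurzweil_Integration.integral_combine[where a=0 and c=a and b=b and f=P] P_int[of 0 b] by simp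

lemma V_bounds:
  assumes "0 \<le> a" "a \<le> b"
  shows "(b-a) * P b \<le> V P b - V P a" "V P b - V P a \<le> (b-a) * P a"
proof -
  have i: "P integrable_on {a..b}" using P_int assms by auto
  have "integral {a..b} (\<lambda>_. P b) \<le> integral {a..b} P"
    by (rule integral_le) (use i assms Pmono in auto)
  then show "(b-a) * P b \<le> V P b - V P a" using V_split[OF assms] assms by simp
  have "integral {a..b} P \<le> integral {a..b} (\<lambda>_. P a)"
    by (rule integral_le) (use i assms Pmono in auto)
  then show "V P b - V P a \<le> (b-a) * P a" using V_split[OF assms] assms by simp
qed

lemma V0: "V P 0 = 0" unfolding V_def by simp

lemma V_nonneg: "0 \<le> s \<Longrightarrow> 0 \<le> V P s"
proof -
  assume s: "0 \<le> s"
  have "(s - 0) * P s \<le> V P s - V P 0" by (rule V_bounds(1)) (use s in auto)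
  moreover have "0 \<le> (s-0) * P s" using Pnn s by auto
  ultimately show ?thesis by (simp add: V0)
qed

lemma V_cont_on: "continuous_on {0..b} (V P)"
  unfolding V_def by (rule indefinite_integral_continuous_1) (rule P_int, simp)

lemma V_isCont: "0 < s \<Longrightarrow> isCont (V P) s"
proof -
  assume s: "0 < s"
  have "continuous_on {0<..<s+1} (V P)" using V_cont_on[of "s+1"] by (rule continuous_on_subset) auto
  then show ?thesis using s by (simp add: continuous_on_eq_continuous_at)
qed

lemma P_unique:
  assumes "0 \<le> q1" "0 \<le> q2" "P q1 = P q2" "P q1 > 0"
  shows "q1 = q2"
proof -
  have "q1 < qbar" using P_big[of q1] assms by force
  moreover have "q2 < qbar" using P_big[of q2] assms by force
  ultimately show ?thesis using Pstrict[rule_format, of q1 q2] Pstrict[rule_format, of q2 q1] assms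
    by (cases q1 q2 rule: linorder_cases) auto
qed

lemma qe_props:
  assumes "0 < \<theta>" "\<theta> \<le> thi"
  shows "0 \<le> q_eff P \<theta>" "P (q_eff P \<theta>) = \<theta>" "q_eff P \<theta> < qbar"
proof -
  obtain qa where qa: "qa \<ge> 0" "P qa = thi" using A2 by auto
  have "P 0 \<ge> thi" using qa Pmono by auto
  then obtain q where q: "0 \<le> q" "q \<le> qbar" "P q = \<theta>"
    using IVT2'[of P qbar \<theta> 0] Pqbar assms qbar_pos continuous_on_subset[OF Pcont, of "{0..qbar}"]
    by auto
  have "\<exists>!x. 0 \<le> x \<and> P x = \<theta>"
  proof (rule ex1I[of _ q])
    show "0 \<le> q \<and> P q = \<theta>" using q by auto
  next
    fix x assume "0 \<le> x \<and> P x = \<theta>"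
    then show "x = q" using P_unique[of x q] q assms by auto
  qed
  then have "q_eff P \<theta> = q" unfolding q_eff_def using q by (simp add: the1_equality)
  then show "0 \<le> q_eff P \<theta>" "P (q_eff P \<theta>) = \<theta>" "q_eff P \<theta> < qbar"
    using q P_big[of q] assms by (auto simp: order.order_iff_strict)
qed

lemma qe_anti:
  assumes "0 < a" "a \<le> b" "b \<le> thi"
  shows "q_eff P b \<le> q_eff P a"
proof (rule ccontr)
  assume "\<not> ?thesis"
  then have "P (q_eff P b) < P (q_eff P a)"
    using Pstrict[rule_format, of "q_eff P a" "q_eff P b"] qe_props[of a] qe_props[of b] assms by auto
  then show False using qe_props[of a] qe_props[of b] assms by auto
qed

definition qA where "qA = q_eff P thi"

lemma qA_props: "0 < qA" "P qA = thi" "qA < qbar" "V P qA - c - thi * qA > 0"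
proof -
  obtain q where q: "q \<ge> 0" "P q = thi" "TS P c thi q > 0" using A2 by auto
  have th: "0 < thi" using tlo_pos tlo_thi by auto
  have "qA = q" unfolding qA_def using qe_props[of thi] th q P_unique by auto
  moreover have "q \<noteq> 0" using q unfolding TS_def by auto
  ultimately show "0 < qA" "P qA = thi" "qA < qbar" "V P qA - c - thi * qA > 0"
    using q qe_props[of thi] th unfolding TS_def qA_def by auto
qed

definition g where "g q = V P q - q * P q"

lemma g_mono: "0 \<le> a \<Longrightarrow> a \<le> b \<Longrightarrow> g a \<le> g b"
proof -
  assume ab: "0 \<le> a" "a \<le> b"
  have "a * P b \<le> a * P a" using ab Pmono by (intro mult_left_mono) auto
  moreover have "(b-a)*P b = b*P b - a*P b" by (simp add: algebra_simps)
  ultimately show ?thesis using V_bounds(1)[OF ab] unfolding g_def by linarith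
qed

lemma g_strict: "0 < a \<Longrightarrow> a < b \<Longrightarrow> a < qbar \<Longrightarrow> g a < g b"
proof -
  assume a: "0 < a" "a < b" "a < qbar"
  have "P b < P a"
  proof (cases "b \<le> qbar")
    case True then show ?thesis using Pstrict a by auto
  next
    case False then show ?thesis using P_big[of b] Pstrict[rule_format, of a qbar] a Pqbar by auto
  qed
  then have "a * P b < a * P a" using a by auto
  moreover have "(b-a)*P b = b*P b - a*P b" by (simp add: algebra_simps)
  ultimately show ?thesis using V_bounds(1)[of a b] a unfolding g_def by linarith
qed

lemma g_cont: "continuous_on {0..b} g"
  unfolding g_def
  by (intro continuous_intros V_cont_on continuous_on_subset[OF Pcont]) auto

definition qh where "qh = q_hat P c"

lemma qh_props: "0 < qh" "g qh = c" "qh < qA"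
proof -
  have g0: "g 0 = 0" unfolding g_def V0 by simp
  have gA: "g qA > c" using qA_props unfolding g_def by (auto simp: algebra_simps)
  obtain q where q: "0 \<le> q" "q \<le> qA" "g q = c"
    using IVT'[of g 0 c qA] g0 gA c_pos qA_props g_cont by auto
  have qpos: "0 < q" using q g0 c_pos by (cases "q = 0") auto
  have uq: "q' = q" if "0 < q'" "g q' = c" for q'
  proof (rule ccontr)
    assume "q' \<noteq> q"
    then consider "q' < q" | "q < q'" by linarith
    then show False
    proof cases
      case 1 then show False using g_strict[of q' q] that q qA_props by auto
    next
      case 2 then show False using g_strict[of q q'] that q qpos qA_props by auto
    qed
  qed
  have "\<exists>!x. 0 < x \<and> V P x - x * P x = c"
  proof (rule ex1I[of _ q])
    show "0 < q \<and> V P q - q * P q = c" using q qpos unfolding g_def by auto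
  next
    fix x assume "0 < x \<and> V P x - x * P x = c"
    then show "x = q" using uq[of x] unfolding g_def by auto
  qed
  then have "qh = q" unfolding qh_def q_hat_def using qpos q unfolding g_def by (simp add: the1_equality)
  then show "0 < qh" "g qh = c" "qh < qA" using qpos q gA by (auto simp: order.order_iff_strict)
qed

abbreviation Th where "Th \<equiv> {tlo..thi}"
abbreviation qe where "qe \<equiv> q_eff P"

lemma qe_Th:
  assumes "\<theta> \<in> Th"
  shows "0 \<le> qe \<theta>" "P (qe \<theta>) = \<theta>" "qe \<theta> < qbar" "qh < qe \<theta>" "qe \<theta> \<le> qe tlo" "qA \<le> qe \<theta>"
proof -
  have t: "0 < \<theta>" "\<theta> \<le> thi" using assms tlo_pos by auto
  show "0 \<le> qe \<theta>" "P (qe \<theta>) = \<theta>" "qe \<theta> < qbar" using qe_props[OF t] by auto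
  show "qA \<le> qe \<theta>" unfolding qA_def using qe_anti[of \<theta> thi] t by auto
  then show "qh < qe \<theta>" using qh_props by auto
  show "qe \<theta> \<le> qe tlo" using qe_anti[of tlo \<theta>] assms tlo_pos by auto
qed

definition phi where "phi s = (if s < qh then s * P qh else V P s - c)"

lemma phi_qh: "V P qh - c = qh * P qh"
  using qh_props unfolding g_def by auto

lemma phi_lin: "0 \<le> s \<Longrightarrow> s \<le> qh \<Longrightarrow> phi s = s * P qh"
  unfolding phi_def using phi_qh by (cases "s = qh") auto

lemma phi0: "phi 0 = 0" using phi_lin[of 0] qh_props by auto

lemma phi_big: "qh \<le> s \<Longrightarrow> phi s = V P s - c"
  unfolding phi_def by auto

lemma V_diff_le: "0 \<le> s \<Longrightarrow> 0 \<le> e \<Longrightarrow> V P s - V P e \<le> (s - e) * P e"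
proof -
  assume a: "0 \<le> s" "0 \<le> e"
  show ?thesis
  proof (cases "e \<le> s")
    case True then show ?thesis using V_bounds(2)[of e s] a by auto
  next
    case False
    then have "(e - s) * P e \<le> V P e - V P s" using V_bounds(1)[of s e] a by auto
    moreover have "(e - s) * P e = - ((s - e) * P e)" by (simp add: algebra_simps)
    ultimately show ?thesis by linarith
  qed
qed

lemma M_pos:
  assumes "\<theta> \<in> Th"
  shows "0 < V P (qe \<theta>) - c - \<theta> * qe \<theta>"
proof -
  have e: "0 \<le> qe \<theta>" "P (qe \<theta>) = \<theta>" using qe_Th[OF assms] by auto
  have "V P qA - V P (qe \<theta>) \<le> (qA - qe \<theta>) * \<theta>" using V_diff_le[of qA "qe \<theta>"] e qA_props by auto
  moreover have "(qA - qe \<theta>) * \<theta> = qA * \<theta> - \<theta> * qe \<theta>" by (simp add: algebra_simps)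
  moreover have "qA * \<theta> \<le> qA * thi" using assms qA_props by (intro mult_left_mono) auto
  moreover have "qA * thi = thi * qA" by simp
  ultimately show ?thesis using qA_props(4) by linarith
qed

lemma M_bound:
  assumes "\<theta> \<in> Th" "0 \<le> s"
  shows "phi s - \<theta> * s \<le> phi (qe \<theta>) - \<theta> * qe \<theta>"
proof -
  have e: "0 \<le> qe \<theta>" "P (qe \<theta>) = \<theta>" "qh < qe \<theta>" using qe_Th[OF assms(1)] by auto
  have pe: "phi (qe \<theta>) = V P (qe \<theta>) - c" using phi_big e by auto
  have big: "phi t - \<theta> * t \<le> phi (qe \<theta>) - \<theta> * qe \<theta>" if t: "qh \<le> t" for t
  proof -
    have "V P t - V P (qe \<theta>) \<le> (t - qe \<theta>) * \<theta>" using V_diff_le[of t "qe \<theta>"] e t qh_props by auto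
    moreover have "(t - qe \<theta>) * \<theta> = \<theta> * t - \<theta> * qe \<theta>" by (simp add: algebra_simps)
    ultimately show ?thesis using phi_big[OF t] pe by linarith
  qed
  show ?thesis
  proof (cases "qh \<le> s")
    case True then show ?thesis using big by auto
  next
    case False
    then have ps: "phi s - \<theta> * s = s * (P qh - \<theta>)" using phi_lin[of s] assms by (simp add: algebra_simps)
    have pq: "phi qh - \<theta> * qh = qh * (P qh - \<theta>)" using phi_lin[of qh] qh_props by (simp add: algebra_simps)
    have M0: "0 < phi (qe \<theta>) - \<theta> * qe \<theta>" using M_pos[OF assms(1)] pe by auto
    show ?thesis
    proof (cases "P qh \<ge> \<theta>")
      case True
      then have "s * (P qh - \<theta>) \<le> qh * (P qh - \<theta>)" using False by (intro mult_right_mono) auto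
      then show ?thesis using ps pq big[of qh] by auto
    next
      case False
      then have "s * (P qh - \<theta>) \<le> 0" using assms by (intro mult_nonneg_nonpos) auto
      then show ?thesis using ps M0 by auto
    qed
  qed
qed

lemma persp:
  assumes r: "0 < r" "r \<le> 1" and q: "0 < q"
  shows "r * (V P q - c) \<le> phi (q * r)"
proof (cases "qh \<le> q * r")
  case True
  define x where "x = q * r"
  have x: "0 < x" "x \<le> q" "qh \<le> x" using r q True unfolding x_def
    by (auto simp: mult_le_cancel_left1)
  have h1: "V P q - V P x \<le> (q - x) * P x" using V_bounds(2)[of x q] x by auto
  have h2: "r * (V P q - V P x) \<le> r * ((q - x) * P x)" using h1 r by (intro mult_left_mono) auto
  have h3: "r * ((q - x) * P x) = x * P x - r * (x * P x)" unfolding x_def by (simp add: algebra_simps)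
  have h4: "c \<le> V P x - x * P x" using g_mono[of qh x] qh_props x unfolding g_def by auto
  have h5: "(1 - r) * c \<le> (1 - r) * (V P x - x * P x)" using h4 r by (intro mult_left_mono) auto
  have h6: "(1 - r) * c = c - r * c" "(1 - r) * (V P x - x * P x) = V P x - x * P x - r * V P x + r * (x * P x)"
    by (simp_all add: algebra_simps)
  have h7: "r * (V P q - V P x) = r * V P q - r * V P x" "r * (V P q - c) = r * V P q - r * c"
    by (simp_all add: algebra_simps)
  have "r * (V P q - c) \<le> V P x - c" using h2 h3 h5 h6 h7 by linarith
  then show ?thesis using phi_big x unfolding x_def by auto
next
  case False
  have "V P q - V P qh \<le> (q - qh) * P qh" using V_diff_le[of q qh] q qh_props by auto
  then have "V P q - c \<le> q * P qh" using phi_qh by (simp add: algebra_simps)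
  then have "r * (V P q - c) \<le> r * (q * P qh)" using r by (intro mult_left_mono) auto
  then show ?thesis using phi_lin[of "q*r"] False q r by (simp add: algebra_simps)
qed

definition Kphi where "Kphi = qbar * P 0 + c"

lemma phi_bound: "0 \<le> s \<Longrightarrow> s \<le> qbar \<Longrightarrow> \<bar>phi s\<bar> \<le> Kphi"
proof -
  assume s: "0 \<le> s" "s \<le> qbar"
  have P0: "0 \<le> P qh" "P qh \<le> P 0" "0 \<le> P 0" using Pnn Pmono qh_props by auto
  show ?thesis
  proof (cases "s < qh")
    case True
    then have "phi s = s * P qh" unfolding phi_def by auto
    moreover have "s * P qh \<le> qbar * P 0" using s P0 by (intro mult_mono) auto
    moreover have "0 \<le> s * P qh" using s P0 by auto
    ultimately show ?thesis unfolding Kphi_def using c_pos by auto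
  next
    case False
    then have "phi s = V P s - c" unfolding phi_def by auto
    moreover have "V P s \<le> s * P 0" using V_bounds(2)[of 0 s] s V0 by auto
    moreover have "s * P 0 \<le> qbar * P 0" using s P0 by (intro mult_right_mono) auto
    moreover have "0 \<le> V P s" using V_nonneg s by auto
    ultimately show ?thesis unfolding Kphi_def using c_pos by auto
  qed
qed

definition U :: "(real \<Rightarrow> real) \<Rightarrow> real \<Rightarrow> real" where "U x \<theta> = integral {\<theta>..thi} x"
definition Obj where "Obj x \<theta> = phi (x \<theta>) - \<theta> * x \<theta> - (1 - \<alpha>) * U x \<theta>"
definition anti :: "(real \<Rightarrow> real) \<Rightarrow> bool" where "anti x \<longleftrightarrow> (\<forall>a b. tlo \<le> a \<longrightarrow> a \<le> b \<longrightarrow> b \<le> thi \<longrightarrow> x b \<le> x a)"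
definition inC where "inC x \<longleftrightarrow> anti x \<and> (\<forall>\<theta>\<in>Th. 0 \<le> x \<theta> \<and> x \<theta> \<le> qbar)"
definition inD where "inD x \<longleftrightarrow> anti x \<and> (\<forall>\<theta>\<in>Th. x \<theta> = 0 \<or> (qh \<le> x \<theta> \<and> x \<theta> \<le> qe \<theta>))"

lemma inD_inC: "inD x \<Longrightarrow> inC x"
proof -
  assume x: "inD x"
  have "0 \<le> x \<theta> \<and> x \<theta> \<le> qbar" if t: "\<theta> \<in> Th" for \<theta>
  proof -
    have "x \<theta> = 0 \<or> (qh \<le> x \<theta> \<and> x \<theta> \<le> qe \<theta>)" using x t unfolding inD_def by auto
    then show ?thesis using qh_props(1) qe_Th(3)[OF t] qbar_pos by auto
  qed
  then show ?thesis using x unfolding inD_def inC_def by auto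
qed

lemma anti_int: "anti x \<Longrightarrow> tlo \<le> a \<Longrightarrow> b \<le> thi \<Longrightarrow> x integrable_on {a..b}"
proof -
  assume x: "anti x" "tlo \<le> a" "b \<le> thi"
  have "mono_on {a..b} (\<lambda>t. - x t)"
  proof (rule mono_onI)
    fix r s assume rs: "r \<in> {a..b}" "s \<in> {a..b}" "r \<le> s"
    then have "tlo \<le> r" "s \<le> thi" using x by auto
    then have "x s \<le> x r" using x(1) rs(3) unfolding anti_def by blast
    then show "(\<lambda>t. - x t) r \<le> (\<lambda>t. - x t) s" by simp
  qed
  then have "(\<lambda>t. - x t) integrable_on {a..b}" by (rule integrable_on_mono_on)
  then have "(\<lambda>t. - (- x t)) integrable_on {a..b}" by (rule integrable_neg)
  then show ?thesis by simp
qed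

lemma int_bounds:
  assumes "anti x" "tlo \<le> a" "a \<le> b" "b \<le> thi"
  shows "(b - a) * x b \<le> integral {a..b} x" "integral {a..b} x \<le> (b - a) * x a"
proof -
  have i: "x integrable_on {a..b}" using anti_int assms by auto
  have "integral {a..b} (\<lambda>_. x b) \<le> integral {a..b} x"
    by (rule integral_le) (use i assms in \<open>auto simp: anti_def\<close>)
  then show "(b - a) * x b \<le> integral {a..b} x" using assms by simp
  have "integral {a..b} x \<le> integral {a..b} (\<lambda>_. x a)"
    by (rule integral_le) (use i assms in \<open>auto simp: anti_def\<close>)
  then show "integral {a..b} x \<le> (b - a) * x a" using assms by simp
qed

lemma U_split:
  assumes "anti x" "tlo \<le> a" "a \<le> b" "b \<le> thi"
  shows "U x a = integral {a..b} x + U x b"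
  unfolding U_def using Henstock_Kurzweil_Integration.integral_combine[where a=a and c=b and b=thi and f=x]
    anti_int[of x a thi] assms by auto

lemma U_bounds:
  assumes "inC x" "\<theta> \<in> Th"
  shows "0 \<le> U x \<theta>" "U x \<theta> \<le> (thi - tlo) * qbar"
proof -
  have i: "x integrable_on {\<theta>..thi}" using anti_int assms unfolding inC_def by auto
  show "0 \<le> U x \<theta>" unfolding U_def
    by (rule integral_nonneg) (use i assms in \<open>auto simp: inC_def\<close>)
  have "integral {\<theta>..thi} x \<le> integral {\<theta>..thi} (\<lambda>_. qbar)"
    by (rule integral_le) (use i assms in \<open>auto simp: inC_def\<close>)
  also have "\<dots> = (thi - \<theta>) * qbar" using assms by simp
  also have "\<dots> \<le> (thi - tlo) * qbar" using assms qbar_pos by (intro mult_right_mono) auto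
  finally show "U x \<theta> \<le> (thi - tlo) * qbar" unfolding U_def .
qed

lemma U_anti:
  assumes "inC x" "tlo \<le> a" "a \<le> b" "b \<le> thi"
  shows "U x b \<le> U x a"
proof -
  have an: "anti x" using assms unfolding inC_def by auto
  have h0: "0 \<le> (b - a) * x b" using assms unfolding inC_def by auto
  show ?thesis using h0 U_split[OF an assms(2-4)] int_bounds(1)[OF an assms(2-4)] by linarith
qed

lemma U_mono:
  assumes "x integrable_on {\<theta>..thi}" "y integrable_on {\<theta>..thi}" "\<And>t. t \<in> {\<theta>..thi} \<Longrightarrow> x t \<le> y t"
  shows "U x \<theta> \<le> U y \<theta>"
  unfolding U_def using assms by (rule integral_le)

definition K where "K = Kphi + thi * qbar + (thi - tlo) * qbar"

lemma Obj_bound: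
  assumes "inC x" "\<theta> \<in> Th"
  shows "\<bar>Obj x \<theta>\<bar> \<le> K"
proof -
  have xb: "0 \<le> x \<theta>" "x \<theta> \<le> qbar" using assms unfolding inC_def by auto
  have "\<bar>phi (x \<theta>)\<bar> \<le> Kphi" using phi_bound xb by auto
  moreover have "\<theta> * x \<theta> \<le> thi * qbar" using xb assms tlo_pos by (intro mult_mono) auto
  moreover have "0 \<le> \<theta> * x \<theta>" using xb assms tlo_pos by auto
  moreover have "(1 - \<alpha>) * U x \<theta> \<le> 1 * ((thi - tlo) * qbar)"
    using U_bounds[OF assms] al0 al1 by (intro mult_mono) auto
  moreover have "0 \<le> (1 - \<alpha>) * U x \<theta>" using U_bounds[OF assms] al1 by auto
  ultimately show ?thesis unfolding Obj_def K_def by auto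
qed

definition clamp where "clamp t = max tlo (min thi t)"

lemma clamp_Th: "clamp t \<in> Th" unfolding clamp_def using tlo_thi by auto
lemma clamp_id: "t \<in> Th \<Longrightarrow> clamp t = t" unfolding clamp_def by auto
lemma clamp_mono: "a \<le> b \<Longrightarrow> clamp a \<le> clamp b" unfolding clamp_def by auto

lemma V_mono_all: "a \<le> b \<Longrightarrow> V P a \<le> V P b"
proof -
  assume ab: "a \<le> b"
  have neg: "V P t = 0" if "t < 0" for t
  proof -
    have "{0..t} = {}" using that by auto
    then show ?thesis unfolding V_def by simp
  qed
  show ?thesis
  proof (cases "a < 0")
    case True
    then show ?thesis using neg[of a] V_nonneg[of b] neg[of b] by (cases "b < 0") auto
  next
    case False
    then have "(b - a) * P b \<le> V P b - V P a" using V_bounds(1)[of a b] ab by auto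
    moreover have "0 \<le> (b - a) * P b" using ab False Pnn by auto
    ultimately show ?thesis by auto
  qed
qed

lemma V_meas: "V P \<in> borel_measurable borel"
  by (rule borel_measurable_mono) (auto simp: mono_def V_mono_all)

lemma phi_meas: "phi \<in> borel_measurable borel"
proof -
  have "(\<lambda>s. if s < qh then s * P qh else V P s - c) \<in> borel_measurable borel"
    using V_meas by measurable
  then show ?thesis unfolding phi_def[abs_def] .
qed

lemma anti_meas:
  fixes f :: "real \<Rightarrow> real"
  assumes "\<And>a b. tlo \<le> a \<Longrightarrow> a \<le> b \<Longrightarrow> b \<le> thi \<Longrightarrow> f b \<le> f a"
  shows "(\<lambda>t. f (clamp t)) \<in> borel_measurable borel"
proof -
  have "mono (\<lambda>t. - f (clamp t))"
  proof (rule monoI)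
    fix a b :: real assume "a \<le> b"
    then have "f (clamp b) \<le> f (clamp a)" using assms clamp_mono clamp_Th by auto
    then show "- f (clamp a) \<le> - f (clamp b)" by simp
  qed
  then have "(\<lambda>t. - f (clamp t)) \<in> borel_measurable borel" by (rule borel_measurable_mono)
  then have "(\<lambda>t. - (- f (clamp t))) \<in> borel_measurable borel" by measurable
  then show ?thesis by simp
qed

lemma Obj_meas:
  assumes "inC x"
  shows "(\<lambda>t. Obj x (clamp t)) \<in> borel_measurable borel"
proof -
  have xm: "(\<lambda>t. x (clamp t)) \<in> borel_measurable borel"
    by (rule anti_meas) (use assms in \<open>auto simp: inC_def anti_def\<close>)
  have um: "(\<lambda>t. U x (clamp t)) \<in> borel_measurable borel"
    by (rule anti_meas) (use assms U_anti in auto)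
  have cm: "clamp \<in> borel_measurable borel"
    by (rule borel_measurable_mono) (auto simp: mono_def clamp_mono)
  have pm: "(\<lambda>t. phi (x (clamp t))) \<in> borel_measurable borel"
    using measurable_compose[OF xm phi_meas] by (simp add: comp_def)
  show ?thesis unfolding Obj_def using xm um cm pm by measurable
qed

lemma meas_G: "(f::real\<Rightarrow>real) \<in> borel_measurable borel \<Longrightarrow> f \<in> borel_measurable G"
  unfolding measurable_def using sets_eq_imp_space_eq[OF setsG] setsG by simp

lemma Th_sets: "Th \<in> sets G" using setsG by simp

lemma setint_bound:
  fixes f :: "real \<Rightarrow> real"
  assumes m: "(\<lambda>t. f (clamp t)) \<in> borel_measurable borel" and b: "\<And>t. t \<in> Th \<Longrightarrow> \<bar>f t\<bar> \<le> B"
  shows "set_integrable G Th f"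
proof -
  interpret prob_space G by (rule probG)
  have eq: "indicator Th t *\<^sub>R f t = indicator Th t * f (clamp t)" for t
    by (cases "t \<in> Th") (auto simp: clamp_id)
  have "(\<lambda>t. indicator Th t * f (clamp t)) \<in> borel_measurable borel"
    using m by measurable
  then have mm: "(\<lambda>t. indicator Th t * f (clamp t)) \<in> borel_measurable G" by (rule meas_G)
  have "integrable G (\<lambda>t. indicator Th t * f (clamp t))"
  proof (rule integrable_const_bound[where B=B])
    show "AE t in G. norm (indicator Th t * f (clamp t)) \<le> B"
      using b[OF clamp_Th] b by (auto simp: indicator_def clamp_id abs_ge_zero intro: order_trans[OF abs_ge_zero])
  qed (rule mm)
  then show ?thesis unfolding set_integrable_def eq .
qed

lemma setint_Obj: "inC x \<Longrightarrow> set_integrable G Th (Obj x)"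
  by (rule setint_bound[OF Obj_meas Obj_bound])

definition J where "J x = (\<integral>\<theta>\<in>Th. Obj x \<theta> \<partial>G)"

lemma J_mono: "inC x \<Longrightarrow> inC y \<Longrightarrow> (\<And>t. t \<in> Th \<Longrightarrow> Obj x t \<le> Obj y t) \<Longrightarrow> J x \<le> J y"
  unfolding J_def by (rule set_integral_mono) (auto intro: setint_Obj)

lemma J_bound: "inC x \<Longrightarrow> J x \<le> K"
proof -
  assume x: "inC x"
  interpret prob_space G by (rule probG)
  have "J x \<le> (\<integral>\<theta>\<in>Th. K \<partial>G)"
    unfolding J_def
  proof (rule set_integral_mono)
    show "set_integrable G Th (\<lambda>_. K)"
      by (rule setint_bound[where B="\<bar>K\<bar>"]) auto
  qed (use x setint_Obj Obj_bound in \<open>auto simp: abs_le_iff\<close>)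
  also have "\<dots> = K" using set_integral_const[OF Th_sets] measG by simp
  finally show ?thesis .
qed

lemma IC_inC:
  assumes mech: "is_mechanism tlo thi qbar r q u" and ic: "is_IC tlo thi r q u"
  shows "inC (\<lambda>t. q t * r t)"
proof -
  have anti: "q b * r b \<le> q a * r a" if ab: "tlo \<le> a" "a \<le> b" "b \<le> thi" for a b
  proof (cases "a = b")
    case False
    have i1: "u a \<ge> u b + (b - a) * q b * r b" using ic ab unfolding is_IC_def by auto
    have i2: "u b \<ge> u a + (a - b) * q a * r a" using ic ab unfolding is_IC_def by auto
    have e: "(b - a) * (q b * r b - q a * r a) = (b - a) * q b * r b + (a - b) * q a * r a"
      by (simp add: algebra_simps)
    have "(b - a) * (q b * r b - q a * r a) \<le> 0" using i1 i2 e by linarith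
    moreover have "0 < b - a" using ab False by auto
    ultimately have "q b * r b - q a * r a \<le> 0" by (simp add: mult_le_0_iff)
    then show ?thesis by simp
  qed simp
  have bnd: "0 \<le> q t * r t \<and> q t * r t \<le> qbar" if t: "t \<in> Th" for t
  proof -
    have "0 \<le> r t" "r t \<le> 1" "0 \<le> q t" "q t \<le> qbar" using mech t unfolding is_mechanism_def by auto
    then have "q t * r t \<le> qbar * 1" by (intro mult_mono) auto
    then show ?thesis using \<open>0 \<le> r t\<close> \<open>0 \<le> q t\<close> by auto
  qed
  show ?thesis unfolding inC_def anti_def using anti bnd by auto
qed

lemma u_lower:
  assumes mech: "is_mechanism tlo thi qbar r q u" and ic: "is_IC tlo thi r q u" and ir: "is_IR tlo thi u"
    and th: "\<theta> \<in> Th"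
  shows "U (\<lambda>t. q t * r t) \<theta> \<le> u \<theta>"
proof -
  define x where "x = (\<lambda>t. q t * r t)"
  have xC: "inC x" unfolding x_def by (rule IC_inC[OF mech ic])
  have an: "anti x" using xC unfolding inC_def by auto
  have xb: "\<And>t. t \<in> Th \<Longrightarrow> 0 \<le> x t \<and> x t \<le> qbar" using xC unfolding inC_def by auto
  have icx: "\<And>a b. a \<in> Th \<Longrightarrow> b \<in> Th \<Longrightarrow> u a \<ge> u b + (b - a) * x b"
    using ic unfolding is_IC_def x_def by (auto simp: mult.assoc)
  have main: "U x \<theta> \<le> u \<theta> + (thi - \<theta>) / real n * qbar" if n: "0 < n" for n :: nat
  proof -
    define h where "h = (thi - \<theta>) / real n"
    define t where "t k = \<theta> + real k * h" for k :: nat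
    have h0: "0 \<le> h" unfolding h_def using th by auto
    have tn: "t n = thi" unfolding t_def h_def using n by auto
    have tle: "t k \<le> thi" if "k \<le> n" for k
    proof -
      have "real k * h \<le> real n * h" using that h0 by (intro mult_right_mono) auto
      then show ?thesis using tn unfolding t_def by auto
    qed
    have tge: "\<theta> \<le> t k" for k unfolding t_def using h0 by auto
    have step: "integral {\<theta>..t k} x - h * (x \<theta> - x (t k)) \<le> u \<theta> - u (t k)" if "k \<le> n" for k
      using that
    proof (induction k)
      case 0 then show ?case unfolding t_def by simp
    next
      case (Suc k)
      have k: "k \<le> n" using Suc by auto
      have tk: "t k \<in> Th" "t (Suc k) \<in> Th" using tle[OF k] tle[OF Suc.prems] tge th by (auto intro: order_trans)
      have ts: "t (Suc k) = t k + h" unfolding t_def by (simp add: algebra_simps)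
      have i1: "u (t k) \<ge> u (t (Suc k)) + h * x (t (Suc k))" using icx[OF tk] ts by auto
      have i2: "integral {t k..t (Suc k)} x \<le> h * x (t k)"
        using int_bounds(2)[OF an, of "t k" "t (Suc k)"] tk ts h0 by auto
      have i3: "integral {\<theta>..t (Suc k)} x = integral {\<theta>..t k} x + integral {t k..t (Suc k)} x"
        using Henstock_Kurzweil_Integration.integral_combine[where a=\<theta> and c="t k" and b="t (Suc k)" and f=x]
          anti_int[OF an, of \<theta> "t (Suc k)"] tk th tge ts h0 by auto
      have e: "h * (x \<theta> - x (t (Suc k))) = h * (x \<theta> - x (t k)) + h * x (t k) - h * x (t (Suc k))"
        by (simp add: algebra_simps)
      show ?case using Suc.IH[OF k] i1 i2 i3 e by linarith
    qed
    have "U x \<theta> - h * (x \<theta> - x thi) \<le> u \<theta> - u thi"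
      using step[of n] tn unfolding U_def by auto
    moreover have "h * (x \<theta> - x thi) \<le> h * qbar"
      using xb[OF th] xb[of thi] tlo_thi h0 by (intro mult_left_mono) auto
    moreover have "0 \<le> u thi" using ir tlo_thi unfolding is_IR_def by auto
    ultimately show ?thesis unfolding h_def by linarith
  qed
  show ?thesis
  proof (rule ccontr)
    assume "\<not> ?thesis"
    then have eps: "0 < U x \<theta> - u \<theta>" unfolding x_def by auto
    obtain n :: nat where n: "(thi - \<theta>) * qbar / (U x \<theta> - u \<theta>) < real n"
      using reals_Archimedean2 by auto
    have npos: "0 < n"
    proof -
      have "0 \<le> (thi - \<theta>) * qbar / (U x \<theta> - u \<theta>)" using th qbar_pos eps by auto
      then show ?thesis using n by (cases n) auto
    qed
    have "(thi - \<theta>) * qbar < real n * (U x \<theta> - u \<theta>)"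
      using n eps by (simp add: divide_less_eq mult.commute)
    then have "(thi - \<theta>) / real n * qbar < U x \<theta> - u \<theta>"
      using npos by (simp add: field_simps)
    then show False using main[OF npos] by linarith
  qed
qed

lemma RS_le_Obj:
  assumes mech: "is_mechanism tlo thi qbar r q u" and ic: "is_IC tlo thi r q u" and ir: "is_IR tlo thi u"
    and th: "\<theta> \<in> Th"
  shows "RS P c \<alpha> r q u \<theta> \<le> Obj (\<lambda>t. q t * r t) \<theta>"
proof -
  have ul: "(1 - \<alpha>) * U (\<lambda>t. q t * r t) \<theta> \<le> (1 - \<alpha>) * u \<theta>"
    using u_lower[OF assms] al1 by (intro mult_left_mono) auto
  have m: "0 \<le> r \<theta>" "r \<theta> \<le> 1" "0 \<le> q \<theta>" "q \<theta> = 0 \<longleftrightarrow> r \<theta> = 0"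
    using mech th unfolding is_mechanism_def by auto
  show ?thesis
  proof (cases "r \<theta> = 0")
    case True
    then show ?thesis using ul m unfolding RS_def Obj_def by (auto simp: phi0)
  next
    case False
    then have r: "0 < r \<theta>" and q: "0 < q \<theta>" using m by auto
    have ts: "TS P c \<theta> (q \<theta>) = V P (q \<theta>) - c - \<theta> * q \<theta>" unfolding TS_def using q by auto
    have p: "r \<theta> * (V P (q \<theta>) - c) \<le> phi (q \<theta> * r \<theta>)" using persp[OF r m(2) q] .
    have e: "r \<theta> * (V P (q \<theta>) - c - \<theta> * q \<theta>) = r \<theta> * (V P (q \<theta>) - c) - \<theta> * (q \<theta> * r \<theta>)"
      by (simp add: algebra_simps)
    show ?thesis unfolding RS_def Obj_def ts using p e ul by linarith
  qed
qed

lemma cap: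
  assumes x: "inC x"
  defines "z \<equiv> (\<lambda>t. min (x t) (qe t))"
  shows "inC z" "\<And>t. t \<in> Th \<Longrightarrow> z t \<le> qe t" "\<And>t. t \<in> Th \<Longrightarrow> Obj x t \<le> Obj z t"
proof -
  have an: "anti z" unfolding anti_def z_def
  proof (intro allI impI)
    fix a b assume ab: "tlo \<le> a" "a \<le> b" "b \<le> thi"
    have "x b \<le> x a" using x ab unfolding inC_def anti_def by auto
    moreover have "qe b \<le> qe a" using qe_anti[of a b] ab tlo_pos by auto
    ultimately show "min (x b) (qe b) \<le> min (x a) (qe a)" by auto
  qed
  show zC: "inC z" using an x qe_Th unfolding inC_def z_def by (auto simp: min_def)
  show "\<And>t. t \<in> Th \<Longrightarrow> z t \<le> qe t" unfolding z_def by auto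
  fix t assume t: "t \<in> Th"
  have p: "phi (x t) - t * x t \<le> phi (z t) - t * z t"
  proof (cases "x t \<le> qe t")
    case True then show ?thesis unfolding z_def by auto
  next
    case False
    then have "z t = qe t" unfolding z_def by auto
    then show ?thesis using M_bound[OF t, of "x t"] x t unfolding inC_def by auto
  qed
  have "U z t \<le> U x t"
    by (rule U_mono) (use zC x t in \<open>auto simp: inC_def intro!: anti_int simp: z_def\<close>)
  then have "(1 - \<alpha>) * U z t \<le> (1 - \<alpha>) * U x t" using al1 by (intro mult_left_mono) auto
  then show "Obj x t \<le> Obj z t" using p unfolding Obj_def by linarith
qed

definition gq :: "nat \<Rightarrow> nat \<Rightarrow> real \<Rightarrow> real" where
  "gq n k s = (if qh \<le> s then s else if k \<le> nat \<lfloor>real n * s / qh\<rfloor> then qh else 0)"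

lemma gq_mono:
  assumes "0 \<le> s1" "s1 \<le> s2"
  shows "gq n k s1 \<le> gq n k s2"
proof -
  have "\<lfloor>real n * s1 / qh\<rfloor> \<le> \<lfloor>real n * s2 / qh\<rfloor>"
    using assms qh_props by (intro floor_mono divide_right_mono mult_left_mono) auto
  then have "nat \<lfloor>real n * s1 / qh\<rfloor> \<le> nat \<lfloor>real n * s2 / qh\<rfloor>" by simp
  then show ?thesis unfolding gq_def using assms qh_props by auto
qed

lemma gq_cases: "0 \<le> s \<Longrightarrow> s < qh \<Longrightarrow> gq n k s = 0 \<or> gq n k s = qh"
  unfolding gq_def by auto

lemma gq_big: "qh \<le> s \<Longrightarrow> gq n k s = s"
  unfolding gq_def by auto

lemma quant_inD:
  assumes z: "inC z" "\<And>t. t \<in> Th \<Longrightarrow> z t \<le> qe t"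
  shows "inD (\<lambda>t. gq n k (z t))"
proof -
  have an: "anti (\<lambda>t. gq n k (z t))" unfolding anti_def
  proof (intro allI impI)
    fix a b assume ab: "tlo \<le> a" "a \<le> b" "b \<le> thi"
    have "0 \<le> z b" "z b \<le> z a" using z ab unfolding inC_def anti_def by auto
    then show "gq n k (z b) \<le> gq n k (z a)" by (rule gq_mono)
  qed
  have "gq n k (z t) = 0 \<or> (qh \<le> gq n k (z t) \<and> gq n k (z t) \<le> qe t)" if t: "t \<in> Th" for t
  proof (cases "qh \<le> z t")
    case True then show ?thesis using gq_big z t by auto
  next
    case False
    then show ?thesis using gq_cases[of "z t" n k] z t qe_Th[OF t] unfolding inC_def by auto
  qed
  then show ?thesis unfolding inD_def using an by auto
qed

lemma sum_gq:
  assumes s: "0 \<le> s" "s < qh" and n: "0 < n"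
  shows "real n * s - qh \<le> (\<Sum>k\<in>{1..n}. gq n k s)" "(\<Sum>k\<in>{1..n}. gq n k s) \<le> real n * s"
proof -
  define y where "y = real n * s / qh"
  define j where "j = nat \<lfloor>y\<rfloor>"
  have qh0: "0 < qh" using qh_props by auto
  have y0: "0 \<le> y" unfolding y_def using s qh0 by auto
  have yn: "y < real n" unfolding y_def using s qh0 n by (simp add: divide_less_eq)
  have jy: "real j \<le> y" "y < real j + 1" unfolding j_def using y0
    by (simp_all add: of_nat_nat)
  have jn: "j \<le> n" using jy yn by linarith
  have "(\<Sum>k\<in>{1..n}. gq n k s) = (\<Sum>k\<in>{1..n}. if k \<le> j then qh else 0)"
    by (rule sum.cong) (use s in \<open>auto simp: gq_def j_def y_def\<close>)
  also have "\<dots> = (\<Sum>k\<in>{k\<in>{1..n}. k \<le> j}. qh)"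
    by (rule sum.inter_filter[symmetric]) simp
  also have "{k\<in>{1..n}. k \<le> j} = {1..j}" using jn by auto
  finally have eq: "(\<Sum>k\<in>{1..n}. gq n k s) = real j * qh" by simp
  have ys: "y * qh = real n * s" unfolding y_def using qh0 by simp
  have "real j * qh \<le> y * qh" using jy qh0 by (intro mult_right_mono) auto
  then show "(\<Sum>k\<in>{1..n}. gq n k s) \<le> real n * s" using eq ys by simp
  have "(y - 1) * qh \<le> real j * qh" using jy qh0 by (intro mult_right_mono) auto
  then show "real n * s - qh \<le> (\<Sum>k\<in>{1..n}. gq n k s)" using eq ys by (simp add: algebra_simps)
qed

definition Cq where "Cq = qh * (P qh + thi)"

lemma Cq_nonneg: "0 \<le> Cq"
  unfolding Cq_def using qh_props Pnn tlo_pos tlo_thi by auto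

lemma quant_point:
  assumes z: "inC z" "\<And>t. t \<in> Th \<Longrightarrow> z t \<le> qe t" and n: "0 < n" and th: "\<theta> \<in> Th"
  shows "real n * Obj z \<theta> \<le> (\<Sum>k\<in>{1..n}. Obj (\<lambda>t. gq n k (z t)) \<theta>) + Cq"
proof -
  define s where "s = z \<theta>"
  have s0: "0 \<le> s" "s \<le> qe \<theta>" using z th unfolding s_def inC_def by auto
  have xkC: "inC (\<lambda>t. gq n k (z t))" for k using quant_inD[OF z] inD_inC by auto
  have xkint: "(\<lambda>t. gq n k (z t)) integrable_on {\<theta>..thi}" for k
    using xkC th unfolding inC_def by (auto intro: anti_int)
  have zint: "z integrable_on {\<theta>..thi}" using z th unfolding inC_def by (auto intro: anti_int)
  have ptw: "(\<Sum>k\<in>{1..n}. gq n k (z t)) \<le> real n * z t" if t: "t \<in> {\<theta>..thi}" for t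
  proof -
    have tt: "t \<in> Th" using t th by auto
    have zt: "0 \<le> z t" using z tt unfolding inC_def by auto
    show ?thesis
    proof (cases "qh \<le> z t")
      case True then show ?thesis using gq_big by simp
    next
      case False then show ?thesis using sum_gq(2)[OF zt _ n] by auto
    qed
  qed
  have sumU: "(\<Sum>k\<in>{1..n}. U (\<lambda>t. gq n k (z t)) \<theta>) \<le> real n * U z \<theta>"
  proof -
    have "(\<Sum>k\<in>{1..n}. U (\<lambda>t. gq n k (z t)) \<theta>) = U (\<lambda>t. \<Sum>k\<in>{1..n}. gq n k (z t)) \<theta>"
      unfolding U_def by (rule integral_sum[symmetric]) (auto intro: xkint)
    also have "\<dots> \<le> U (\<lambda>t. real n * z t) \<theta>"
    proof (rule U_mono)
      show "(\<lambda>t. \<Sum>k\<in>{1..n}. gq n k (z t)) integrable_on {\<theta>..thi}"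
        by (rule integrable_sum) (auto intro: xkint)
      show "(\<lambda>t. real n * z t) integrable_on {\<theta>..thi}" by (rule integrable_on_mult_right[OF zint])
      show "\<And>t. t \<in> {\<theta>..thi} \<Longrightarrow> (\<Sum>k\<in>{1..n}. gq n k (z t)) \<le> real n * z t" by (rule ptw)
    qed
    also have "\<dots> = real n * U z \<theta>" unfolding U_def
      using integral_mult[OF zint, of "real n"] by simp
    finally show ?thesis .
  qed
  have sumphi: "real n * (phi s - \<theta> * s) - Cq \<le> (\<Sum>k\<in>{1..n}. phi (gq n k s) - \<theta> * gq n k s)"
  proof (cases "qh \<le> s")
    case True
    then show ?thesis using gq_big[OF True] Cq_nonneg by simp
  next
    case False
    then have sl: "s < qh" by auto
    have each: "phi (gq n k s) - \<theta> * gq n k s = gq n k s * (P qh - \<theta>)" for k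
      using gq_cases[OF s0(1) sl, of n k] phi_lin[of qh] phi0 qh_props
      by (auto simp: algebra_simps)
    have S: "(\<Sum>k\<in>{1..n}. phi (gq n k s) - \<theta> * gq n k s) = (\<Sum>k\<in>{1..n}. gq n k s) * (P qh - \<theta>)"
      unfolding each by (simp add: sum_distrib_right)
    define Sg where "Sg = (\<Sum>k\<in>{1..n}. gq n k s)"
    have b1: "real n * s - qh \<le> Sg" "Sg \<le> real n * s" using sum_gq[OF s0(1) sl n] unfolding Sg_def by auto
    have ps: "phi s - \<theta> * s = s * (P qh - \<theta>)" using phi_lin[of s] s0 sl by (simp add: algebra_simps)
    have "(real n * s - Sg) * (P qh - \<theta>) \<le> (real n * s - Sg) * (P qh + thi)"
      using b1 th tlo_pos by (intro mult_left_mono) auto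
    also have "\<dots> \<le> qh * (P qh + thi)"
      using b1 Pnn qh_props th tlo_pos by (intro mult_right_mono) auto
    finally have "(real n * s - Sg) * (P qh - \<theta>) \<le> Cq" unfolding Cq_def .
    moreover have "real n * (s * (P qh - \<theta>)) = (real n * s - Sg) * (P qh - \<theta>) + Sg * (P qh - \<theta>)"
      by (simp add: algebra_simps)
    moreover have "real n * (phi s - \<theta> * s) = real n * (s * (P qh - \<theta>))" using ps by simp
    ultimately show ?thesis using S unfolding Sg_def by linarith
  qed
  have sumObj: "(\<Sum>k\<in>{1..n}. Obj (\<lambda>t. gq n k (z t)) \<theta>)
      = (\<Sum>k\<in>{1..n}. phi (gq n k s) - \<theta> * gq n k s) - (1 - \<alpha>) * (\<Sum>k\<in>{1..n}. U (\<lambda>t. gq n k (z t)) \<theta>)"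
    unfolding Obj_def s_def by (simp add: sum_subtractf sum_distrib_left)
  have "(1 - \<alpha>) * (\<Sum>k\<in>{1..n}. U (\<lambda>t. gq n k (z t)) \<theta>) \<le> (1 - \<alpha>) * (real n * U z \<theta>)"
    using sumU al1 by (intro mult_left_mono) auto
  moreover have "real n * Obj z \<theta> = real n * (phi s - \<theta> * s) - (1 - \<alpha>) * (real n * U z \<theta>)"
    unfolding Obj_def s_def by (simp add: algebra_simps)
  ultimately show ?thesis using sumObj sumphi by linarith
qed

lemma quant_J:
  assumes z: "inC z" "\<And>t. t \<in> Th \<Longrightarrow> z t \<le> qe t" and n: "0 < n"
  shows "real n * J z \<le> (\<Sum>k\<in>{1..n}. J (\<lambda>t. gq n k (z t))) + Cq"
proof -
  interpret prob_space G by (rule probG)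
  have xkC: "inC (\<lambda>t. gq n k (z t))" for k using quant_inD[OF z] inD_inC by auto
  have i1: "set_integrable G Th (\<lambda>t. real n * Obj z t)"
    using setint_Obj[OF z(1)] by auto
  have m2: "(\<lambda>t. (\<Sum>k\<in>{1..n}. Obj (\<lambda>t. gq n k (z t)) (clamp t)) + Cq) \<in> borel_measurable borel"
    using Obj_meas[OF xkC] by measurable
  have b2: "\<bar>(\<Sum>k\<in>{1..n}. Obj (\<lambda>t. gq n k (z t)) t) + Cq\<bar> \<le> real n * K + Cq" if t: "t \<in> Th" for t
  proof -
    have "\<bar>\<Sum>k\<in>{1..n}. Obj (\<lambda>t. gq n k (z t)) t\<bar> \<le> (\<Sum>k\<in>{1..n}. \<bar>Obj (\<lambda>t. gq n k (z t)) t\<bar>)"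
      by (rule sum_abs)
    also have "\<dots> \<le> (\<Sum>k\<in>{1..n}. K)" by (rule sum_mono) (use Obj_bound[OF xkC t] in auto)
    finally show ?thesis using Cq_nonneg by simp
  qed
  have i2: "set_integrable G Th (\<lambda>t. (\<Sum>k\<in>{1..n}. Obj (\<lambda>t. gq n k (z t)) t) + Cq)"
    by (rule setint_bound[OF m2 b2])
  have "real n * J z = (\<integral>t\<in>Th. real n * Obj z t \<partial>G)" unfolding J_def by simp
  also have "\<dots> \<le> (\<integral>t\<in>Th. (\<Sum>k\<in>{1..n}. Obj (\<lambda>t. gq n k (z t)) t) + Cq \<partial>G)"
    by (rule set_integral_mono[OF i1 i2 quant_point[OF z n]])
  also have "\<dots> = (\<Sum>k\<in>{1..n}. J (\<lambda>t. gq n k (z t))) + Cq"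
  proof -
    define f where "f k t = indicator Th t *\<^sub>R Obj (\<lambda>t. gq n k (z t)) t" for k t
    define gC where "gC t = indicator Th t *\<^sub>R Cq" for t
    have ik: "integrable G (f k)" for k
      using setint_Obj[OF xkC] unfolding set_integrable_def f_def by auto
    have ic: "integrable G gC"
      using setint_bound[of "\<lambda>_. Cq" "\<bar>Cq\<bar>"] unfolding set_integrable_def gC_def by auto
    have feq: "(\<lambda>t. indicator Th t *\<^sub>R ((\<Sum>k\<in>{1..n}. Obj (\<lambda>t. gq n k (z t)) t) + Cq))
        = (\<lambda>t. (\<Sum>k\<in>{1..n}. f k t) + gC t)"
      unfolding f_def gC_def by (simp only: scaleR_add_right scaleR_sum_right)
    have "(\<integral>t\<in>Th. (\<Sum>k\<in>{1..n}. Obj (\<lambda>t. gq n k (z t)) t) + Cq \<partial>G)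
        = integral\<^sup>L G (\<lambda>t. (\<Sum>k\<in>{1..n}. f k t) + gC t)"
      unfolding set_lebesgue_integral_def feq ..
    also have "\<dots> = integral\<^sup>L G (\<lambda>t. \<Sum>k\<in>{1..n}. f k t) + integral\<^sup>L G gC"
      by (rule Bochner_Integration.integral_add) (auto intro!: Bochner_Integration.integrable_sum ik ic)
    also have "integral\<^sup>L G (\<lambda>t. \<Sum>k\<in>{1..n}. f k t) = (\<Sum>k\<in>{1..n}. integral\<^sup>L G (f k))"
      by (rule Bochner_Integration.integral_sum) (rule ik)
    also have "integral\<^sup>L G gC = Cq"
      using set_integral_const[OF Th_sets, of Cq] measG unfolding set_lebesgue_integral_def gC_def by simp
    also have "(\<Sum>k\<in>{1..n}. integral\<^sup>L G (f k)) = (\<Sum>k\<in>{1..n}. J (\<lambda>t. gq n k (z t)))"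
      unfolding J_def set_lebesgue_integral_def f_def ..
    finally show ?thesis .
  qed
  finally show ?thesis .
qed

lemma approx:
  assumes x: "inC x" and opt: "\<And>y. inD y \<Longrightarrow> J y \<le> Js"
  shows "J x \<le> Js"
proof -
  define z where "z = (\<lambda>t. min (x t) (qe t))"
  have zC: "inC z" and zq: "\<And>t. t \<in> Th \<Longrightarrow> z t \<le> qe t"
    using cap[OF x] unfolding z_def by auto
  have xz: "J x \<le> J z" using J_mono[OF x zC] cap(3)[OF x] unfolding z_def by auto
  have main: "real n * J z \<le> real n * Js + Cq" if n: "0 < n" for n
  proof -
    have "real n * J z \<le> (\<Sum>k\<in>{1..n}. J (\<lambda>t. gq n k (z t))) + Cq" by (rule quant_J[OF zC zq n])
    also have "(\<Sum>k\<in>{1..n}. J (\<lambda>t. gq n k (z t))) \<le> (\<Sum>k\<in>{1..n}. Js)"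
      by (rule sum_mono) (rule opt[OF quant_inD[OF zC zq]])
    finally show ?thesis by simp
  qed
  have "J z \<le> Js"
  proof (rule ccontr)
    assume "\<not> ?thesis"
    then have eps: "0 < J z - Js" by auto
    obtain n :: nat where n: "Cq / (J z - Js) < real n" using reals_Archimedean2 by auto
    have npos: "0 < n"
    proof -
      have "0 \<le> Cq / (J z - Js)" using Cq_nonneg eps by auto
      then show ?thesis using n by (cases n) auto
    qed
    have "Cq < real n * (J z - Js)" using n eps by (simp add: divide_less_eq mult.commute)
    then show False using main[OF npos] by (simp add: algebra_simps)
  qed
  then show ?thesis using xz by auto
qed

lemma J_alt: "J x = (\<integral>t. indicator Th t * Obj x (clamp t) \<partial>G)"
proof -
  have eq: "indicator Th t *\<^sub>R Obj x t = indicator Th t * Obj x (clamp t)" for t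
    by (cases "t \<in> Th") (auto simp: clamp_id)
  show ?thesis unfolding J_def set_lebesgue_integral_def
    by (rule Bochner_Integration.integral_cong[OF refl eq])
qed

lemma Obj_conv:
  assumes xs: "\<And>m. inD (xs m)" and xl: "inD xl" and th: "\<theta> \<in> Th"
    and conv: "\<And>t. t \<in> Th \<Longrightarrow> (\<lambda>m. xs m t) \<longlonglongrightarrow> xl t"
  shows "(\<lambda>m. Obj (xs m) \<theta>) \<longlonglongrightarrow> Obj xl \<theta>"
proof -
  have xsC: "inC (xs m)" for m using xs inD_inC by auto
  have xlC: "inC xl" using xl inD_inC by auto
  have qh0: "0 < qh" using qh_props by auto
  have c1: "(\<lambda>m. xs m \<theta>) \<longlonglongrightarrow> xl \<theta>" using conv th by auto
  have vals: "xs m \<theta> = 0 \<or> qh \<le> xs m \<theta>" for m using xs[of m] th unfolding inD_def by blast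
  have vall: "xl \<theta> = 0 \<or> qh \<le> xl \<theta>" using xl th unfolding inD_def by blast
  have pc: "(\<lambda>m. phi (xs m \<theta>)) \<longlonglongrightarrow> phi (xl \<theta>)"
  proof (cases "xl \<theta> = 0")
    case True
    have "eventually (\<lambda>m. xs m \<theta> < qh) sequentially"
      using order_tendstoD(2)[OF c1, of qh] True qh0 by auto
    then have "eventually (\<lambda>m. phi (xs m \<theta>) = phi (xl \<theta>)) sequentially"
    proof (rule eventually_mono)
      fix m assume "xs m \<theta> < qh"
      then have "xs m \<theta> = 0" using vals[of m] by auto
      then show "phi (xs m \<theta>) = phi (xl \<theta>)" using True phi0 by simp
    qed
    then show ?thesis by (rule tendsto_eventually)
  next
    case False
    then have big: "qh \<le> xl \<theta>" using vall by auto
    have "eventually (\<lambda>m. 0 < xs m \<theta>) sequentially"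
      using order_tendstoD(1)[OF c1, of 0] big qh0 by auto
    then have ev: "eventually (\<lambda>m. V P (xs m \<theta>) - c = phi (xs m \<theta>)) sequentially"
    proof (rule eventually_mono)
      fix m assume "0 < xs m \<theta>"
      then have "qh \<le> xs m \<theta>" using vals[of m] by auto
      then show "V P (xs m \<theta>) - c = phi (xs m \<theta>)" using phi_big by simp
    qed
    have "(\<lambda>m. V P (xs m \<theta>)) \<longlonglongrightarrow> V P (xl \<theta>)"
      using isCont_tendsto_compose[OF V_isCont c1] big qh0 by auto
    then have "(\<lambda>m. V P (xs m \<theta>) - c) \<longlonglongrightarrow> V P (xl \<theta>) - c" by (intro tendsto_intros)
    then have "(\<lambda>m. phi (xs m \<theta>)) \<longlonglongrightarrow> V P (xl \<theta>) - c" using ev by (rule Lim_transform_eventually)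
    then show ?thesis using phi_big[OF big] by simp
  qed
  have uc: "(\<lambda>m. U (xs m) \<theta>) \<longlonglongrightarrow> U xl \<theta>"
    unfolding U_def
  proof (rule dominated_convergence(2)[where h="\<lambda>_. qbar"])
    show "\<And>k. xs k integrable_on {\<theta>..thi}" using xsC th unfolding inC_def by (auto intro: anti_int)
    show "(\<lambda>_. qbar) integrable_on {\<theta>..thi}" by (rule integrable_continuous_interval) (rule continuous_on_const)
    show "\<And>k t. t \<in> {\<theta>..thi} \<Longrightarrow> norm (xs k t) \<le> qbar" using xsC th unfolding inC_def by auto
    show "\<And>t. t \<in> {\<theta>..thi} \<Longrightarrow> (\<lambda>k. xs k t) \<longlonglongrightarrow> xl t" using conv th by auto
  qed
  show ?thesis unfolding Obj_def by (intro tendsto_intros pc c1 uc)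
qed

lemma zero_inD: "inD (\<lambda>_. 0)" unfolding inD_def anti_def by auto

lemma J_zero: "J (\<lambda>_. 0) = 0"
proof -
  have "Obj (\<lambda>_. 0) = (\<lambda>_. 0)" unfolding Obj_def U_def by (simp add: phi0)
  then show ?thesis unfolding J_def set_lebesgue_integral_def by simp
qed

lemma exists_opt: "\<exists>x. inD x \<and> (\<forall>y. inD y \<longrightarrow> J y \<le> J x)"
proof -
  interpret prob_space G by (rule probG)
  define S where "S = J ` {x. inD x}"
  have Sne: "S \<noteq> {}" unfolding S_def using zero_inD by auto
  have Sbdd: "bdd_above S" unfolding S_def using J_bound inD_inC by (auto intro!: bdd_aboveI)
  define \<sigma> where "\<sigma> = Sup S"
  have up: "J x \<le> \<sigma>" if "inD x" for x unfolding \<sigma>_def S_def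
    using cSup_upper[OF _ Sbdd] that unfolding S_def by auto
  have "\<forall>n. \<exists>x. inD x \<and> \<sigma> - 1 / (real n + 1) < J x"
  proof
    fix n :: nat
    have "\<sigma> - 1 / (real n + 1) < \<sigma>" by auto
    then obtain v where "v \<in> S" "\<sigma> - 1 / (real n + 1) < v"
      using less_cSup_iff[OF Sne Sbdd] unfolding \<sigma>_def by auto
    then show "\<exists>x. inD x \<and> \<sigma> - 1 / (real n + 1) < J x" unfolding S_def by auto
  qed
  then obtain xs where xs: "\<And>n. inD (xs n)" "\<And>n. \<sigma> - 1 / (real n + 1) < J (xs n)"
    by metis
  have xsC: "inC (xs n)" for n using xs inD_inC by auto
  have Jc: "(\<lambda>n. J (xs n)) \<longlonglongrightarrow> \<sigma>"
  proof (rule tendsto_sandwich[where f="\<lambda>n. \<sigma> - 1 / (real n + 1)" and h="\<lambda>n. \<sigma>"])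
    show "eventually (\<lambda>n. \<sigma> - 1 / (real n + 1) \<le> J (xs n)) sequentially"
      using xs(2) by (intro always_eventually allI less_imp_le)
    show "eventually (\<lambda>n. J (xs n) \<le> \<sigma>) sequentially" by (intro always_eventually allI up xs(1))
    have "(\<lambda>n. 1 / (real n + 1)) \<longlonglongrightarrow> 0" using LIMSEQ_inverse_real_of_nat
      by (simp add: inverse_eq_divide add.commute)
    then show "(\<lambda>n. \<sigma> - 1 / (real n + 1)) \<longlonglongrightarrow> \<sigma>"
      using tendsto_diff[OF tendsto_const[of \<sigma>]] by fastforce
  qed simp
  define f where "f n t = - xs n (clamp t)" for n t
  have fm: "mono (f n)" for n
  proof (rule monoI)
    fix a b :: real assume "a \<le> b"
    then have "xs n (clamp b) \<le> xs n (clamp a)" using xsC[of n] clamp_mono clamp_Th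
      unfolding inC_def anti_def by auto
    then show "f n a \<le> f n b" unfolding f_def by simp
  qed
  have fb: "\<bar>f n t\<bar> \<le> qbar" for n t using xsC[of n] clamp_Th[of t] unfolding f_def inC_def by auto
  obtain d where d: "strict_mono d" and dc: "\<And>t. convergent (\<lambda>m. f (d m) t)"
    using helly_all[where f=f and M=qbar, OF fm fb] by blast
  define xl where "xl t = lim (\<lambda>m. xs (d m) t)" for t
  have conv: "(\<lambda>m. xs (d m) t) \<longlonglongrightarrow> xl t" if t: "t \<in> Th" for t
  proof -
    have "convergent (\<lambda>m. - xs (d m) t)" using dc[of t] clamp_id[OF t] unfolding f_def by simp
    then have "convergent (\<lambda>m. xs (d m) t)" using convergent_minus_iff by blast
    then show ?thesis unfolding xl_def by (simp add: convergent_LIMSEQ_iff)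
  qed
  have xlD: "inD xl"
  proof -
    have an: "anti xl" unfolding anti_def
    proof (intro allI impI)
      fix a b assume ab: "tlo \<le> a" "a \<le> b" "b \<le> thi"
      show "xl b \<le> xl a"
        by (rule LIMSEQ_le[OF conv conv]) (use ab xs(1) in \<open>auto simp: inD_def anti_def\<close>)
    qed
    have "xl t \<in> {0} \<union> {qh..qe t}" if t: "t \<in> Th" for t
    proof -
      have cl: "closed ({0} \<union> {qh..qe t})" by (intro closed_Un) auto
      have "\<forall>m. xs (d m) t \<in> {0} \<union> {qh..qe t}"
      proof
        fix m
        have "xs (d m) t = 0 \<or> (qh \<le> xs (d m) t \<and> xs (d m) t \<le> qe t)"
          using xs(1)[of "d m"] t unfolding inD_def by blast
        then show "xs (d m) t \<in> {0} \<union> {qh..qe t}" by auto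
      qed
      then show ?thesis
        using closed_sequential_limits[THEN iffD1, OF cl, rule_format, OF conjI[OF _ conv[OF t]]] by blast
    qed
    then show ?thesis using an unfolding inD_def by auto
  qed
  have xlC: "inC xl" using xlD inD_inC by auto
  have "(\<lambda>m. J (xs (d m))) \<longlonglongrightarrow> J xl"
    unfolding J_alt
  proof (rule integral_dominated_convergence[where w="\<lambda>_. K"])
    show "(\<lambda>t. indicator Th t * Obj xl (clamp t)) \<in> borel_measurable G"
      by (rule meas_G) (use Obj_meas[OF xlC] in measurable)
    show "\<And>m. (\<lambda>t. indicator Th t * Obj (xs (d m)) (clamp t)) \<in> borel_measurable G"
      by (rule meas_G) (use Obj_meas[OF xsC] in measurable)
    show "integrable G (\<lambda>_. K)" by simp
    show "AE t in G. (\<lambda>m. indicator Th t * Obj (xs (d m)) (clamp t)) \<longlonglongrightarrow> indicator Th t * Obj xl (clamp t)"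
    proof (rule AE_I2)
      fix t
      show "(\<lambda>m. indicator Th t * Obj (xs (d m)) (clamp t)) \<longlonglongrightarrow> indicator Th t * Obj xl (clamp t)"
        by (intro tendsto_intros Obj_conv[OF xs(1) xlD clamp_Th conv])
    qed
    show "\<And>m. AE t in G. norm (indicator Th t * Obj (xs (d m)) (clamp t)) \<le> K"
    proof (rule AE_I2)
      fix m t
      have "\<bar>Obj (xs (d m)) (clamp t)\<bar> \<le> K" by (rule Obj_bound[OF xsC clamp_Th])
      moreover have "0 \<le> K" using Obj_bound[OF xsC clamp_Th] by (meson abs_ge_zero order_trans)
      ultimately show "norm (indicator Th t * Obj (xs (d m)) (clamp t)) \<le> K"
        by (auto simp: indicator_def)
    qed
  qed
  moreover have "(\<lambda>m. J (xs (d m))) \<longlonglongrightarrow> \<sigma>"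
    using LIMSEQ_subseq_LIMSEQ[OF Jc d] by (simp add: comp_def)
  ultimately have "J xl = \<sigma>" by (rule LIMSEQ_unique)
  then show ?thesis using xlD up by auto
qed

lemma tlo_fix:
  assumes x: "inD x"
  defines "y \<equiv> x(tlo := qe tlo)"
  shows "inD y" "J x \<le> J y"
proof -
  have tloT: "tlo \<in> Th" using tlo_thi by auto
  have xv: "\<And>t. t \<in> Th \<Longrightarrow> x t \<le> qe t" using x qe_Th unfolding inD_def by fastforce
  have an: "anti y" unfolding anti_def
  proof (intro allI impI)
    fix a b assume ab: "tlo \<le> a" "a \<le> b" "b \<le> thi"
    show "y b \<le> y a"
    proof (cases "a = tlo")
      case True
      then show ?thesis unfolding y_def using xv[of b] qe_Th(5)[of b] ab by auto
    next
      case False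
      then have "b \<noteq> tlo" using ab by auto
      then show ?thesis unfolding y_def using x ab False unfolding inD_def anti_def by auto
    qed
  qed
  show yD: "inD y" using an x qe_Th[OF tloT] unfolding inD_def y_def by auto
  have xC: "inC x" using x inD_inC by auto
  have yC: "inC y" using yD inD_inC by auto
  show "J x \<le> J y"
  proof (rule J_mono[OF xC yC])
    fix t assume t: "t \<in> Th"
    have Ueq: "U y t = U x t"
    proof (cases "t = tlo")
      case True
      have "integral {t..thi} x = integral {t..thi} y"
        by (rule integral_spike[of "{tlo}"]) (auto simp: y_def)
      then show ?thesis unfolding U_def by simp
    next
      case False
      then have "integral {t..thi} y = integral {t..thi} x"
        using t by (intro integral_cong) (auto simp: y_def)
      then show ?thesis unfolding U_def by simp
    qed
    show "Obj x t \<le> Obj y t"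
    proof (cases "t = tlo")
      case True
      have "phi (x t) - t * x t \<le> phi (y t) - t * y t"
        using M_bound[OF t, of "x t"] xC t True unfolding inC_def y_def by auto
      then show ?thesis unfolding Obj_def Ueq by simp
    next
      case False
      have "y t = x t" using False unfolding y_def by simp
      then show ?thesis unfolding Obj_def Ueq by simp
    qed
  qed
qed

lemma main:
  "\<exists>r q u.
           is_mechanism tlo thi qbar r q u \<and> is_IC tlo thi r q u \<and> is_IR tlo thi u
           \<and> deterministic tlo thi r
           \<and> set_integrable G {tlo..thi} (RS P c \<alpha> r q u)
           \<and> (\<forall>r' q' u'. is_mechanism tlo thi qbar r' q' u' \<and> is_IC tlo thi r' q' u'
                \<and> is_IR tlo thi u' \<longrightarrow>
                RS_exp P c \<alpha> tlo thi G r' q' u' \<le> RS_exp P c \<alpha> tlo thi G r q u)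
           \<and> DD P tlo thi q
           \<and> (\<forall>\<theta>\<in>{tlo..thi}. q \<theta> > 0 \<longrightarrow> q \<theta> \<ge> q_hat P c)"
proof -
  obtain x0 where x0: "inD x0" and opt0: "\<And>y. inD y \<Longrightarrow> J y \<le> J x0"
    using exists_opt by blast
  define y where "y = x0(tlo := qe tlo)"
  have yD: "inD y" and yge: "J x0 \<le> J y" using tlo_fix[OF x0] unfolding y_def by auto
  have opt: "\<And>z. inD z \<Longrightarrow> J z \<le> J y" using opt0 yge by (meson order_trans)
  have yC: "inC y" using yD inD_inC by auto
  have ytlo: "y tlo = qe tlo" unfolding y_def by simp
  have yv: "\<And>t. t \<in> Th \<Longrightarrow> y t = 0 \<or> (qh \<le> y t \<and> y t \<le> qe t)" using yD unfolding inD_def by blast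
  have ya: "anti y" using yD unfolding inD_def by auto
  define r where "r t = (if y t = 0 then 0 else (1::real))" for t
  define u where "u = U y"
  have ry: "\<And>t. y t * r t = y t" unfolding r_def by auto
  have mech: "is_mechanism tlo thi qbar r y u"
    unfolding is_mechanism_def r_def using yC unfolding inC_def by auto
  have ic: "is_IC tlo thi r y u"
    unfolding is_IC_def
  proof (intro ballI)
    fix a b assume a: "a \<in> Th" and b: "b \<in> Th"
    have e: "(b - a) * y b * r b = (b - a) * y b" using ry[of b] by (metis mult.assoc)
    show "u b + (b - a) * y b * r b \<le> u a"
    proof (cases "a \<le> b")
      case True
      have "U y a = integral {a..b} y + U y b" using U_split[OF ya] a b True by auto
      moreover have "(b - a) * y b \<le> integral {a..b} y" using int_bounds(1)[OF ya] a b True by auto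
      ultimately show ?thesis unfolding u_def using e by linarith
    next
      case False
      have "U y b = integral {b..a} y + U y a" using U_split[OF ya, of b a] a b False by auto
      moreover have "integral {b..a} y \<le> (a - b) * y b" using int_bounds(2)[OF ya, of b a] a b False by auto
      moreover have "(b - a) * y b = - ((a - b) * y b)" by (simp add: algebra_simps)
      ultimately show ?thesis unfolding u_def using e by linarith
    qed
  qed
  have ir: "is_IR tlo thi u" unfolding is_IR_def u_def using U_bounds[OF yC] by auto
  have det: "deterministic tlo thi r" unfolding deterministic_def r_def by auto
  have RSeq: "RS P c \<alpha> r y u t = Obj y t" if t: "t \<in> Th" for t
  proof (cases "y t = 0")
    case True then show ?thesis unfolding RS_def Obj_def r_def u_def by (simp add: phi0)
  next
    case False
    then have b: "qh \<le> y t" using yv[OF t] by auto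
    then have "TS P c t (y t) = phi (y t) - t * y t" unfolding TS_def using False phi_big by auto
    then show ?thesis unfolding RS_def Obj_def r_def u_def using False by simp
  qed
  have si: "set_integrable G Th (RS P c \<alpha> r y u)"
  proof -
    have "set_integrable G Th (RS P c \<alpha> r y u) = set_integrable G Th (Obj y)"
      by (rule set_integrable_cong[OF refl refl]) (rule RSeq)
    then show ?thesis using setint_Obj[OF yC] by simp
  qed
  have RSexp: "RS_exp P c \<alpha> tlo thi G r y u = J y"
    unfolding RS_exp_def J_def by (rule set_lebesgue_integral_cong) (auto simp: RSeq Th_sets)
  have J0: "0 \<le> J y" using opt[OF zero_inD] J_zero by simp
  have best: "RS_exp P c \<alpha> tlo thi G r' q' u' \<le> RS_exp P c \<alpha> tlo thi G r y u"
    if m': "is_mechanism tlo thi qbar r' q' u'" and ic': "is_IC tlo thi r' q' u'" and ir': "is_IR tlo thi u'"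
    for r' q' u'
  proof (cases "set_integrable G Th (RS P c \<alpha> r' q' u')")
    case True
    have xC: "inC (\<lambda>t. q' t * r' t)" by (rule IC_inC[OF m' ic'])
    have "RS_exp P c \<alpha> tlo thi G r' q' u' \<le> J (\<lambda>t. q' t * r' t)"
      unfolding RS_exp_def J_def
      by (rule set_integral_mono[OF True setint_Obj[OF xC]]) (rule RS_le_Obj[OF m' ic' ir'])
    also have "\<dots> \<le> J y" by (rule approx[OF xC opt])
    finally show ?thesis using RSexp by simp
  next
    case False
    then have "RS_exp P c \<alpha> tlo thi G r' q' u' = 0"
      unfolding RS_exp_def set_lebesgue_integral_def set_integrable_def
      by (simp add: not_integrable_integral_eq)
    then show ?thesis using RSexp J0 by simp
  qed
  have dd: "DD P tlo thi y"
    unfolding DD_def using yv qe_Th ytlo by fastforce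
  have fl: "\<forall>\<theta>\<in>{tlo..thi}. y \<theta> > 0 \<longrightarrow> y \<theta> \<ge> q_hat P c"
    using yv unfolding qh_def by fastforce
  have best': "\<forall>r' q' u'. is_mechanism tlo thi qbar r' q' u' \<and> is_IC tlo thi r' q' u'
                \<and> is_IR tlo thi u' \<longrightarrow>
                RS_exp P c \<alpha> tlo thi G r' q' u' \<le> RS_exp P c \<alpha> tlo thi G r y u"
    using best by blast
  show ?thesis
    apply (rule exI[of _ r])
    apply (rule exI[of _ y])
    apply (rule exI[of _ u])
    using mech ic ir det si best' dd fl by (intro conjI)
qed

end

theorem corollary1:
  fixes P :: "real \<Rightarrow> real" and c \<alpha> tlo thi qbar :: real and G :: "real measure"
  assumes "0 < tlo" and "tlo < thi"
    and "c > 0"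
    and "qbar > 0"
    and "continuous_on {0..} P"
    and "\<forall>x\<ge>0. P x \<ge> 0"
    and "\<forall>x y. 0 \<le> x \<and> x \<le> y \<longrightarrow> P y \<le> P x"
    and "\<forall>x y. 0 \<le> x \<and> x < y \<and> y \<le> qbar \<longrightarrow> P y < P x"
    and "P qbar = 0"
    and A2: "\<exists>q\<ge>0. P q = thi \<and> TS P c thi q > 0"
    and "0 \<le> \<alpha>" and "\<alpha> < 1"
    and "prob_space G" and "sets G = sets borel" and "measure G {tlo..thi} = 1"
  shows "\<exists>r q u.
           is_mechanism tlo thi qbar r q u \<and> is_IC tlo thi r q u \<and> is_IR tlo thi u
           \<and> deterministic tlo thi r
           \<and> set_integrable G {tlo..thi} (RS P c \<alpha> r q u)
           \<and> (\<forall>r' q' u'. is_mechanism tlo thi qbar r' q' u' \<and> is_IC tlo thi r' q' u'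
                \<and> is_IR tlo thi u' \<longrightarrow>
                RS_exp P c \<alpha> tlo thi G r' q' u' \<le> RS_exp P c \<alpha> tlo thi G r q u)
           \<and> DD P tlo thi q
           \<and> (\<forall>\<theta>\<in>{tlo..thi}. q \<theta> > 0 \<longrightarrow> q \<theta> \<ge> q_hat P c)"
proof -
  interpret setting P c \<alpha> tlo thi qbar G
    by (rule setting.intro[OF assms])
  show ?thesis by (rule main)
qed

end
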